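(* In a finite dynamic game as described in the context, let $K^i$ be unilaterally sufficient information for player $i$, with associated functions $F_t^{i,g^i}$. For every behavioral strategy $g^i$ of player $i$, let $\rho^i$ be the $K^i$-based strategy given by $$\rho_t^i(u_t^i\mid k_t^i)=\sum_{\tilde h_t^i\in\mathcal{H}_t^i}g_t^i(u_t^i\mid\tilde h_t^i)\,F_t^{i,g^i}(\tilde h_t^i\mid k_t^i).$$ Then $J^j(g^i,g^{-i})=J^j(\rho^i,g^{-i})$ for all players $j\in\mathcal{I}$ and all behavioral strategy profiles $g^{-i}$ of the players other than $i$.
   Context: Game model: finite set of players $\mathcal{I}$, times $\mathcal{T}=\{1,\dots,T\}$. At time $t$ each player $i$ takes action $U_t^i\in\mathcal{U}_t^i$, obtains reward $R_t^i\in[-1,1]$ and learns new information $Z_t^i\in\mathcal{Z}_t^i$. There is a state $X_t\in\mathcal{X}_t$ with $(X_{t+1},Z_t,R_t)=f_t(X_t,U_t,W_t)$ for fixed functions $f_t$. Primitive random variables $(X_1,H_1)$ and $W_1,\dots,W_T$ are mutually independent with commonly known distributions. All sets are finite. Perfect recall: $H_t^i=(H_1^i,Z_{1:t-1}^i)\in\mathcal{H}_t^i$, and $U_t^i$ is a component of $Z_t^i$. Behavioral strategy $g_t^i:\mathcal{H}_t^i\to\Delta(\mathcal{U}_t^i)$; payoff $J^j(g)=\mathbb{E}^g[\sum_t R_t^j]$. A realization is admissible under $g$ if it has positive probability under $g$. Compression: $K_1^i=\iota_1^i(H_1^i)$, $K_t^i=\iota_t^i(K_{t-1}^i,Z_{t-1}^i)$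 for fixed maps, finite value sets $\mathcal{K}_t^i$; $k_t^i$ is the compression of $h_t^i$; a $K^i$-based strategy has $\rho_t^i:\mathcal{K}_t^i\to\Delta(\mathcal{U}_t^i)$. Unilaterally sufficient information (USI): $K^i$ is USI for player $i$ if there exist $F_t^{i,g^i}:\mathcal{K}_t^i\to\Delta(\mathcal{H}_t^i)$ depending only on $g^i$ and $\Phi_t^{i,g^{-i}}:\mathcal{K}_t^i\to\Delta(\mathcal{X}_t\times\mathcal{H}_t^{-i})$ depending only on $g^{-i}$ with $\Pr^g(x_t,h_t\mid k_t^i)=F_t^{i,g^i}(h_t^i\mid k_t^i)\Phi_t^{i,g^{-i}}(x_t,h_t^{-i}\mid k_t^i)$ for all behavioral profiles $g$, all $t$, all $k_t^i$ admissible under $g$ (with $x_t,h_t^i,h_t^{-i}$ ranging independently; the left side is $0$ if they disagree on shared components). *)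

theory Defs
  imports "HOL-Probability.Probability"
begin

text \<open>
Players: finite type 'p.  Times 1..T (natural numbers).
States 'x, actions 'u, new information 'z, noise 'w, initial private information 'h,
compressed information 'k (all finite types).  The time- and player-dependent
action sets are given by A t i.
The dynamics f t x u w = (X_{t+1}, Z_t, R_t).
P0 is the joint law of (X_1, H_1) and PW t the law of W_t (all mutually independent by
construction of the process below).
A history of player i at time t is H_t^i = (H_1^i, [Z_1^i, ..., Z_{t-1}^i]).
\<close>

type_synonym ('h, 'z) hist = "'h \<times> 'z list"

definition Hset :: "nat \<Rightarrow> ('h, 'z) hist set" where
  "Hset t = {h. length (snd h) = t - 1}"

definition behavioral ::
  "(nat \<Rightarrow> 'p \<Rightarrow> 'u set) \<Rightarrow> ('p \<Rightarrow> nat \<Rightarrow> ('h, 'z) hist \<Rightarrow> 'u pmf) \<Rightarrow> bool" where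
  "behavioral A g \<longleftrightarrow> (\<forall>i t h. set_pmf (g i t h) \<subseteq> A t i)"

text \<open>Process state: (X_t, (H_t^i)_i, cumulative rewards up to time t-1).\<close>
definition init_state ::
  "('x \<times> ('p \<Rightarrow> 'h)) pmf \<Rightarrow> ('x \<times> ('p \<Rightarrow> ('h, 'z) hist) \<times> ('p \<Rightarrow> real)) pmf" where
  "init_state P0 = map_pmf (\<lambda>(x, h1). (x, \<lambda>i. (h1 i, []), \<lambda>i. 0)) P0"

definition step ::
  "(nat \<Rightarrow> 'x \<Rightarrow> ('p::finite \<Rightarrow> 'u) \<Rightarrow> 'w \<Rightarrow> 'x \<times> ('p \<Rightarrow> 'z) \<times> ('p \<Rightarrow> real))
   \<Rightarrow> (nat \<Rightarrow> 'w pmf) \<Rightarrow> ('p \<Rightarrow> nat \<Rightarrow> ('h, 'z) hist \<Rightarrow> 'u pmf) \<Rightarrow> nat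
   \<Rightarrow> 'x \<times> ('p \<Rightarrow> ('h, 'z) hist) \<times> ('p \<Rightarrow> real)
   \<Rightarrow> ('x \<times> ('p \<Rightarrow> ('h, 'z) hist) \<times> ('p \<Rightarrow> real)) pmf" where
  "step f PW g t s =
     (case s of (x, h, c) \<Rightarrow>
       bind_pmf (Pi_pmf UNIV undefined (\<lambda>i. g i t (h i))) (\<lambda>u.
       bind_pmf (PW t) (\<lambda>w.
         (case f t x u w of (x', z, r) \<Rightarrow>
            return_pmf (x', \<lambda>i. (fst (h i), snd (h i) @ [z i]), \<lambda>i. c i + r i)))))"

text \<open>run ... g n is the law of the process state at time n+1.\<close>
primrec run ::
  "('x \<times> ('p \<Rightarrow> 'h)) pmf
   \<Rightarrow> (nat \<Rightarrow> 'x \<Rightarrow> ('p::finite \<Rightarrow> 'u) \<Rightarrow> 'w \<Rightarrow> 'x \<times> ('p \<Rightarrow> 'z) \<times> ('p \<Rightarrow> real))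
   \<Rightarrow> (nat \<Rightarrow> 'w pmf) \<Rightarrow> ('p \<Rightarrow> nat \<Rightarrow> ('h, 'z) hist \<Rightarrow> 'u pmf) \<Rightarrow> nat
   \<Rightarrow> ('x \<times> ('p \<Rightarrow> ('h, 'z) hist) \<times> ('p \<Rightarrow> real)) pmf" where
  "run P0 f PW g 0 = init_state P0"
| "run P0 f PW g (Suc n) = bind_pmf (run P0 f PW g n) (step f PW g (Suc n))"

definition XH ::
  "('x \<times> ('p \<Rightarrow> 'h)) pmf
   \<Rightarrow> (nat \<Rightarrow> 'x \<Rightarrow> ('p::finite \<Rightarrow> 'u) \<Rightarrow> 'w \<Rightarrow> 'x \<times> ('p \<Rightarrow> 'z) \<times> ('p \<Rightarrow> real))
   \<Rightarrow> (nat \<Rightarrow> 'w pmf) \<Rightarrow> ('p \<Rightarrow> nat \<Rightarrow> ('h, 'z) hist \<Rightarrow> 'u pmf) \<Rightarrow> nat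
   \<Rightarrow> ('x \<times> ('p \<Rightarrow> ('h, 'z) hist)) pmf" where
  "XH P0 f PW g t = map_pmf (\<lambda>(x, h, c). (x, h)) (run P0 f PW g (t - 1))"

definition payoff ::
  "nat \<Rightarrow> ('x \<times> ('p \<Rightarrow> 'h)) pmf
   \<Rightarrow> (nat \<Rightarrow> 'x \<Rightarrow> ('p::finite \<Rightarrow> 'u) \<Rightarrow> 'w \<Rightarrow> 'x \<times> ('p \<Rightarrow> 'z) \<times> ('p \<Rightarrow> real))
   \<Rightarrow> (nat \<Rightarrow> 'w pmf) \<Rightarrow> ('p \<Rightarrow> nat \<Rightarrow> ('h, 'z) hist \<Rightarrow> 'u pmf) \<Rightarrow> 'p \<Rightarrow> real" where
  "payoff T P0 f PW g j = measure_pmf.expectation (run P0 f PW g T) (\<lambda>(x, h, c). c j)"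

text \<open>Compression: K_1^i = iota1 i H_1^i, K_t^i = iota t i K_{t-1}^i Z_{t-1}^i.
  kseq ... h1 zs n computes K_{n+1}^i.\<close>
primrec kseq ::
  "('p \<Rightarrow> 'h \<Rightarrow> 'k) \<Rightarrow> (nat \<Rightarrow> 'p \<Rightarrow> 'k \<Rightarrow> 'z \<Rightarrow> 'k) \<Rightarrow> 'p \<Rightarrow> 'h \<Rightarrow> 'z list \<Rightarrow> nat \<Rightarrow> 'k" where
  "kseq iota1 iota i h1 zs 0 = iota1 i h1"
| "kseq iota1 iota i h1 zs (Suc n) = iota (Suc (Suc n)) i (kseq iota1 iota i h1 zs n) (zs ! n)"

definition compr ::
  "('p \<Rightarrow> 'h \<Rightarrow> 'k) \<Rightarrow> (nat \<Rightarrow> 'p \<Rightarrow> 'k \<Rightarrow> 'z \<Rightarrow> 'k) \<Rightarrow> 'p \<Rightarrow> ('h, 'z) hist \<Rightarrow> 'k" where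
  "compr iota1 iota i h = kseq iota1 iota i (fst h) (snd h) (length (snd h))"

text \<open>Unilaterally sufficient information, with witnesses F (depending only on g^i,
  i.e. F takes player i's strategy) and Phi (depending only on g^{-i}).  Distributions on
  H_t^{-i} are represented as distributions on extensional functions on -{i} (PiE).\<close>
definition usi_funs ::
  "nat \<Rightarrow> (nat \<Rightarrow> 'p \<Rightarrow> 'u set) \<Rightarrow> ('x \<times> ('p \<Rightarrow> 'h)) pmf
   \<Rightarrow> (nat \<Rightarrow> 'x \<Rightarrow> ('p::finite \<Rightarrow> 'u) \<Rightarrow> 'w \<Rightarrow> 'x \<times> ('p \<Rightarrow> 'z) \<times> ('p \<Rightarrow> real))
   \<Rightarrow> (nat \<Rightarrow> 'w pmf) \<Rightarrow> ('p \<Rightarrow> 'h \<Rightarrow> 'k) \<Rightarrow> (nat \<Rightarrow> 'p \<Rightarrow> 'k \<Rightarrow> 'z \<Rightarrow> 'k) \<Rightarrow> 'p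
   \<Rightarrow> ((nat \<Rightarrow> ('h, 'z) hist \<Rightarrow> 'u pmf) \<Rightarrow> nat \<Rightarrow> 'k \<Rightarrow> ('h, 'z) hist pmf)
   \<Rightarrow> (('p \<Rightarrow> nat \<Rightarrow> ('h, 'z) hist \<Rightarrow> 'u pmf) \<Rightarrow> nat \<Rightarrow> 'k \<Rightarrow> ('x \<times> ('p \<Rightarrow> ('h, 'z) hist)) pmf)
   \<Rightarrow> bool" where
  "usi_funs T A P0 f PW iota1 iota i F Phi \<longleftrightarrow>
     (\<forall>g g'. (\<forall>j. j \<noteq> i \<longrightarrow> g j = g' j) \<longrightarrow> Phi g = Phi g') \<and>
     (\<forall>gi t k. t \<in> {1..T} \<longrightarrow> set_pmf (F gi t k) \<subseteq> Hset t) \<and>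
     (\<forall>g t k. t \<in> {1..T} \<longrightarrow>
        set_pmf (Phi g t k) \<subseteq> UNIV \<times> (PiE (- {i}) (\<lambda>_. Hset t))) \<and>
     (\<forall>g. behavioral A g \<longrightarrow> (\<forall>t \<in> {1..T}. \<forall>k.
        let S = {(x, h). compr iota1 iota i (h i) = k} in
        set_pmf (XH P0 f PW g t) \<inter> S \<noteq> {} \<longrightarrow>
        (\<forall>x h. (\<forall>j. h j \<in> Hset t) \<longrightarrow>
           pmf (cond_pmf (XH P0 f PW g t) S) (x, h)
             = pmf (F (g i) t k) (h i) * pmf (Phi g t k) (x, restrict h (- {i})))))"

definition USI ::
  "nat \<Rightarrow> (nat \<Rightarrow> 'p \<Rightarrow> 'u set) \<Rightarrow> ('x \<times> ('p \<Rightarrow> 'h)) pmf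
   \<Rightarrow> (nat \<Rightarrow> 'x \<Rightarrow> ('p::finite \<Rightarrow> 'u) \<Rightarrow> 'w \<Rightarrow> 'x \<times> ('p \<Rightarrow> 'z) \<times> ('p \<Rightarrow> real))
   \<Rightarrow> (nat \<Rightarrow> 'w pmf) \<Rightarrow> ('p \<Rightarrow> 'h \<Rightarrow> 'k) \<Rightarrow> (nat \<Rightarrow> 'p \<Rightarrow> 'k \<Rightarrow> 'z \<Rightarrow> 'k) \<Rightarrow> 'p \<Rightarrow> bool" where
  "USI T A P0 f PW iota1 iota i \<longleftrightarrow> (\<exists>F Phi. usi_funs T A P0 f PW iota1 iota i F Phi)"

definition rho_of ::
  "((nat \<Rightarrow> ('h, 'z) hist \<Rightarrow> 'u pmf) \<Rightarrow> nat \<Rightarrow> 'k \<Rightarrow> ('h, 'z) hist pmf)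
   \<Rightarrow> (nat \<Rightarrow> ('h, 'z) hist \<Rightarrow> 'u pmf) \<Rightarrow> nat \<Rightarrow> 'k \<Rightarrow> 'u pmf" where
  "rho_of F gi t k = bind_pmf (F gi t k) (gi t)"

definition kbased ::
  "('p \<Rightarrow> 'h \<Rightarrow> 'k) \<Rightarrow> (nat \<Rightarrow> 'p \<Rightarrow> 'k \<Rightarrow> 'z \<Rightarrow> 'k) \<Rightarrow> 'p
   \<Rightarrow> (nat \<Rightarrow> 'k \<Rightarrow> 'u pmf) \<Rightarrow> nat \<Rightarrow> ('h, 'z) hist \<Rightarrow> 'u pmf" where
  "kbased iota1 iota i rho t h = rho t (compr iota1 iota i h)"

end

theory Submission
  imports Defs
begin


lemma Pi_bind_coord:
  fixes i :: "'p::finite"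
  shows "bind_pmf A (\<lambda>a. Pi_pmf UNIV d (\<lambda>j. if j = i then q a else r j))
       = Pi_pmf UNIV d (\<lambda>j. if j = i then bind_pmf A q else r j)"
proof -
  have U: "(UNIV :: 'p set) = insert i (- {i})" by auto
  have fin: "finite (- {i})" by simp
  have P: "\<And>p. Pi_pmf (- {i}) d (\<lambda>j. if j = i then p else r j) = Pi_pmf (- {i}) d r"
    by (rule Pi_pmf_cong) auto
  show ?thesis
    unfolding U
    by (simp add: Pi_pmf_insert'[OF fin] P bind_assoc_pmf)
qed

lemma pmf_map_inj_ins:
  assumes "inj_on f (insert a (set_pmf M))"
  shows "pmf (map_pmf f M) (f a) = pmf M a"
proof -
  have "f -` {f a} \<inter> set_pmf M = {a} \<inter> set_pmf M"
    using assms by (auto simp: inj_on_def)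
  then have "measure M (f -` {f a}) = measure M {a}"
    by (metis measure_Int_set_pmf)
  then show ?thesis by (simp add: pmf_map measure_pmf_single)
qed



lemma cond_decomp:
  fixes M :: "('x \<times> ('p \<Rightarrow> 'a)) pmf" and i :: 'p
  assumes supp: "\<And>x h j. (x, h) \<in> set_pmf M \<Longrightarrow> h j \<in> H"
    and Fs: "set_pmf Fk \<subseteq> H"
    and Ps: "set_pmf Ph \<subseteq> UNIV \<times> PiE (- {i}) (\<lambda>_. H)"
    and ne: "set_pmf M \<inter> S \<noteq> {}"
    and fact: "\<And>x h. (\<forall>j. h j \<in> H) \<Longrightarrow> pmf (cond_pmf M S) (x, h) = pmf Fk (h i) * pmf Ph (x, restrict h (- {i}))"
  shows "cond_pmf M S = map_pmf (\<lambda>((x, h'), hi). (x, h'(i := hi))) (pair_pmf Ph Fk)"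
proof (rule pmf_eqI)
  fix y :: "'x \<times> ('p \<Rightarrow> 'a)"
  obtain x h where y: "y = (x, h)" by (cases y)
  let ?comb = "\<lambda>((x::'x, h'::'p \<Rightarrow> 'a), hi::'a). (x, h'(i := hi))"
  let ?a = "((x, restrict h (- {i})), h i)"
  have ca: "?comb ?a = y" using y by (auto simp: fun_eq_iff)
  have inj: "inj_on ?comb (insert ?a (set_pmf (pair_pmf Ph Fk)))"
  proof (rule inj_onI)
    fix p q assume p: "p \<in> insert ?a (set_pmf (pair_pmf Ph Fk))" and q: "q \<in> insert ?a (set_pmf (pair_pmf Ph Fk))"
      and e: "?comb p = ?comb q"
    have und: "\<And>r. r \<in> insert ?a (set_pmf (pair_pmf Ph Fk)) \<Longrightarrow> snd (fst r) i = undefined"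
      using Ps by (auto simp: PiE_def extensional_def)
    obtain x1 h1 a1 where p': "p = ((x1, h1), a1)" by (metis prod.collapse)
    obtain x2 h2 a2 where q': "q = ((x2, h2), a2)" by (metis prod.collapse)
    have "h1 i = undefined" "h2 i = undefined" using und[OF p] und[OF q] p' q' by auto
    moreover have "x1 = x2" "h1(i := a1) = h2(i := a2)" using e p' q' by auto
    ultimately show "p = q" using p' q'
      by (auto simp: fun_eq_iff) (metis fun_upd_same, metis fun_upd_other)
  qed
  have R: "pmf (map_pmf ?comb (pair_pmf Ph Fk)) y = pmf (pair_pmf Ph Fk) ?a"
    using pmf_map_inj_ins[OF inj] ca by simp
  show "pmf (cond_pmf M S) y = pmf (map_pmf ?comb (pair_pmf Ph Fk)) y"
  proof (cases "\<forall>j. h j \<in> H")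
    case True
    then show ?thesis using R fact[OF True] y by (simp add: pmf_pair mult.commute)
  next
    case False
    then obtain j where j: "h j \<notin> H" by blast
    have "y \<notin> set_pmf M" using supp j y by blast
    then have L: "pmf (cond_pmf M S) y = 0" using ne by (simp add: pmf_cond pmf_eq_0_set_pmf)
    have "?a \<notin> set_pmf (pair_pmf Ph Fk)"
    proof
      assume "?a \<in> set_pmf (pair_pmf Ph Fk)"
      then have "(x, restrict h (- {i})) \<in> set_pmf Ph" "h i \<in> set_pmf Fk" by auto
      then have "restrict h (- {i}) \<in> PiE (- {i}) (\<lambda>_. H)" "h i \<in> H" using Ps Fs by blast+
      then show False using j by (cases "j = i") (auto simp: PiE_def Pi_def)
    qed
    then have "pmf (pair_pmf Ph Fk) ?a = 0" by (simp add: pmf_eq_0_set_pmf)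
    then show ?thesis using L R by simp
  qed
qed



lemma bind_map_pair:
  "bind_pmf (map_pmf (\<lambda>((x, h'), hi). (x, h'(i := hi))) (pair_pmf P F)) Q =
   bind_pmf P (\<lambda>(x, h'). bind_pmf F (\<lambda>hi. Q (x, h'(i := hi))))"
  by (simp add: bind_map_pmf pair_pmf_def bind_assoc_pmf bind_return_pmf case_prod_beta')

lemma key_factor:
  fixes M :: "('x \<times> ('p::finite \<Rightarrow> 'a)) pmf" and i :: 'p and kf :: "'a \<Rightarrow> 'k"
  assumes supp: "\<And>x h j. (x, h) \<in> set_pmf M \<Longrightarrow> h j \<in> H"
    and Fs: "\<And>k. set_pmf (Fk k) \<subseteq> H"
    and Ps: "\<And>k. set_pmf (Ph k) \<subseteq> UNIV \<times> PiE (- {i}) (\<lambda>_. H)"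
    and fact: "\<And>k x h. set_pmf M \<inter> {(x, h). kf (h i) = k} \<noteq> {} \<Longrightarrow> (\<forall>j. h j \<in> H) \<Longrightarrow>
        pmf (cond_pmf M {(x, h). kf (h i) = k}) (x, h) = pmf (Fk k) (h i) * pmf (Ph k) (x, restrict h (- {i}))"
  shows "bind_pmf M (\<lambda>(x, h). map_pmf (\<lambda>u. ((x, restrict h (- {i}), kf (h i)), u)) (Pi_pmf UNIV d (\<lambda>j. G j (h j))))
     = bind_pmf (map_pmf (\<lambda>(x, h). (x, restrict h (- {i}), kf (h i))) M)
         (\<lambda>(x, h', k). map_pmf (\<lambda>u. ((x, h', k), u))
             (Pi_pmf UNIV d (\<lambda>j. if j = i then bind_pmf (Fk k) (G i) else G j (h' j))))"
  (is "bind_pmf M ?Ker = bind_pmf (map_pmf ?pr M) ?Ker2")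
proof -
  define K where "K = map_pmf (\<lambda>y. kf (snd y i)) M"
  define S where "S k = {y :: 'x \<times> ('p \<Rightarrow> 'a). kf (snd y i) = k}" for k
  have Seq: "\<And>k. {(x, h). kf (h i) = k} = S k" by (auto simp: S_def)
  let ?comb = "\<lambda>((x::'x, h'::'p \<Rightarrow> 'a), hi::'a). (x, h'(i := hi))"
  have dec: "bind_pmf K (\<lambda>k. cond_pmf M (S k)) = M"
    unfolding S_def
  proof (rule bind_cond_pmf_cancel)
    fix k assume "k \<in> set_pmf K" then show "set_pmf M \<inter> {y. kf (snd y i) = k} \<noteq> {}"
      by (auto simp: K_def)
  next
    fix y assume "y \<in> set_pmf M" then show "set_pmf K \<inter> {k. kf (snd y i) = k} \<noteq> {}"
      by (auto simp: K_def)
  next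
    fix k y assume "k \<in> set_pmf K" "y \<in> set_pmf M" "kf (snd y i) = k"
    then show "measure_pmf.prob M {y. kf (snd y i) = k} = measure_pmf.prob K {x. kf (snd y i) = x}"
      by (simp add: K_def measure_map_pmf vimage_def)
  qed
  have ne: "\<And>k. k \<in> set_pmf K \<Longrightarrow> set_pmf M \<inter> S k \<noteq> {}" by (auto simp: K_def S_def)
  have C: "\<And>k. k \<in> set_pmf K \<Longrightarrow> cond_pmf M (S k) = map_pmf ?comb (pair_pmf (Ph k) (Fk k))"
  proof -
    fix k assume k: "k \<in> set_pmf K"
    show "cond_pmf M (S k) = map_pmf ?comb (pair_pmf (Ph k) (Fk k))"
      by (rule cond_decomp[where H=H]) (use supp Fs Ps ne[OF k] fact[of k] Seq[of k] in auto)
  qed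
  have Csupp: "\<And>k x h' hi. k \<in> set_pmf K \<Longrightarrow> (x, h') \<in> set_pmf (Ph k) \<Longrightarrow> hi \<in> set_pmf (Fk k) \<Longrightarrow>
      kf hi = k \<and> restrict (h'(i := hi)) (- {i}) = h' \<and> (\<forall>j. j \<noteq> i \<longrightarrow> h' j = (h'(i := hi)) j)"
  proof -
    fix k x h' hi assume k: "k \<in> set_pmf K" and a: "(x, h') \<in> set_pmf (Ph k)" and b: "hi \<in> set_pmf (Fk k)"
    have "(x, h'(i := hi)) \<in> set_pmf (cond_pmf M (S k))"
      using C[OF k] a b by force
    then have "kf hi = k" using ne[OF k] by (simp add: S_def)
    moreover have "h' \<in> PiE (- {i}) (\<lambda>_. H)" using Ps a by blast
    then have "restrict (h'(i := hi)) (- {i}) = h'"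
      by (auto simp: PiE_def extensional_def fun_eq_iff)
    ultimately show "kf hi = k \<and> restrict (h'(i := hi)) (- {i}) = h' \<and> (\<forall>j. j \<noteq> i \<longrightarrow> h' j = (h'(i := hi)) j)"
      by simp
  qed
  let ?T = "bind_pmf K (\<lambda>k. bind_pmf (Ph k) (\<lambda>(x, h'). ?Ker2 (x, h', k)))"
  have L: "bind_pmf M ?Ker = ?T"
  proof -
    have "bind_pmf M ?Ker = bind_pmf K (\<lambda>k. bind_pmf (cond_pmf M (S k)) ?Ker)"
      by (subst dec[symmetric]) (simp add: bind_assoc_pmf)
    also have "\<dots> = bind_pmf K (\<lambda>k. bind_pmf (Ph k) (\<lambda>(x, h'). bind_pmf (Fk k) (\<lambda>hi. ?Ker (x, h'(i := hi)))))"
      by (rule bind_pmf_cong, simp, simp only: C bind_map_pair)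
    also have "\<dots> = ?T"
    proof (rule bind_pmf_cong, simp)
      fix k assume k: "k \<in> set_pmf K"
      show "bind_pmf (Ph k) (\<lambda>(x, h'). bind_pmf (Fk k) (\<lambda>hi. ?Ker (x, h'(i := hi)))) =
            bind_pmf (Ph k) (\<lambda>(x, h'). ?Ker2 (x, h', k))"
      proof (rule bind_pmf_cong, simp)
        fix y assume y: "y \<in> set_pmf (Ph k)"
        obtain x h' where yy: "y = (x, h')" by (cases y)
        have "bind_pmf (Fk k) (\<lambda>hi. ?Ker (x, h'(i := hi))) =
              bind_pmf (Fk k) (\<lambda>hi. map_pmf (\<lambda>u. ((x, h', k), u))
                 (Pi_pmf UNIV d (\<lambda>j. if j = i then G i hi else G j (h' j))))"
        proof (rule bind_pmf_cong, simp)
          fix hi assume hi: "hi \<in> set_pmf (Fk k)"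
          note cs = Csupp[OF k y[unfolded yy] hi]
          have "Pi_pmf UNIV d (\<lambda>j. G j ((h'(i := hi)) j)) = Pi_pmf UNIV d (\<lambda>j. if j = i then G i hi else G j (h' j))"
            by (rule Pi_pmf_cong) auto
          then show "?Ker (x, h'(i := hi)) = map_pmf (\<lambda>u. ((x, h', k), u))
                 (Pi_pmf UNIV d (\<lambda>j. if j = i then G i hi else G j (h' j)))"
            using cs by simp
        qed
        also have "\<dots> = map_pmf (\<lambda>u. ((x, h', k), u))
              (bind_pmf (Fk k) (\<lambda>hi. Pi_pmf UNIV d (\<lambda>j. if j = i then G i hi else G j (h' j))))"
          by (simp add: map_bind_pmf)
        also have "\<dots> = ?Ker2 (x, h', k)"
          by (simp add: Pi_bind_coord)
        finally show "(case y of (x, h') \<Rightarrow> bind_pmf (Fk k) (\<lambda>hi. ?Ker (x, h'(i := hi)))) =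
                      (case y of (x, h') \<Rightarrow> ?Ker2 (x, h', k))" using yy by simp
      qed
    qed
    finally show ?thesis .
  qed
  have R: "bind_pmf (map_pmf ?pr M) ?Ker2 = ?T"
  proof -
    have "bind_pmf (map_pmf ?pr M) ?Ker2 = bind_pmf M (\<lambda>y. ?Ker2 (?pr y))"
      by (simp add: bind_map_pmf)
    also have "\<dots> = bind_pmf K (\<lambda>k. bind_pmf (cond_pmf M (S k)) (\<lambda>y. ?Ker2 (?pr y)))"
      by (subst dec[symmetric]) (simp add: bind_assoc_pmf)
    also have "\<dots> = bind_pmf K (\<lambda>k. bind_pmf (Ph k) (\<lambda>(x, h'). bind_pmf (Fk k) (\<lambda>hi. ?Ker2 (?pr (x, h'(i := hi))))))"
      by (rule bind_pmf_cong, simp, simp only: C bind_map_pair)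
    also have "\<dots> = ?T"
    proof (rule bind_pmf_cong, simp)
      fix k assume k: "k \<in> set_pmf K"
      show "bind_pmf (Ph k) (\<lambda>(x, h'). bind_pmf (Fk k) (\<lambda>hi. ?Ker2 (?pr (x, h'(i := hi))))) =
            bind_pmf (Ph k) (\<lambda>(x, h'). ?Ker2 (x, h', k))"
      proof (rule bind_pmf_cong, simp)
        fix y assume y: "y \<in> set_pmf (Ph k)"
        obtain x h' where yy: "y = (x, h')" by (cases y)
        have "bind_pmf (Fk k) (\<lambda>hi. ?Ker2 (?pr (x, h'(i := hi)))) = bind_pmf (Fk k) (\<lambda>hi. ?Ker2 (x, h', k))"
        proof (rule bind_pmf_cong, simp)
          fix hi assume hi: "hi \<in> set_pmf (Fk k)"
          note cs = Csupp[OF k y[unfolded yy] hi]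
          then show "?Ker2 (?pr (x, h'(i := hi))) = ?Ker2 (x, h', k)" by simp
        qed
        then show "(case y of (x, h') \<Rightarrow> bind_pmf (Fk k) (\<lambda>hi. ?Ker2 (?pr (x, h'(i := hi))))) =
                   (case y of (x, h') \<Rightarrow> ?Ker2 (x, h', k))" using yy by simp
      qed
    qed
    finally show ?thesis .
  qed
  show ?thesis using L R by simp
qed



lemma kseq_append:
  "n \<le> length zs \<Longrightarrow> kseq a b i h (zs @ ys) n = kseq a b i h zs n"
  by (induction n) (auto simp: nth_append)

lemma compr_snoc:
  "compr a b i (h1, zs @ [z]) = b (Suc (Suc (length zs))) i (compr a b i (h1, zs)) z"
  by (simp add: compr_def kseq_append)

lemma set_step:
  assumes "s \<in> set_pmf (step f PW g t (x, h, c))"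
  shows "\<exists>x' z r. s = (x', \<lambda>i. (fst (h i), snd (h i) @ [z i]), \<lambda>i. c i + r i)"
proof -
  from assms obtain u w where "s \<in> set_pmf (case f t x u w of (x', z, r) \<Rightarrow>
            return_pmf (x', \<lambda>i. (fst (h i), snd (h i) @ [z i]), \<lambda>i. c i + r i))"
    by (auto simp: step_def)
  then show ?thesis by (cases "f t x u w") auto
qed

lemma run_len:
  "s \<in> set_pmf (run P0 f PW g n) \<Longrightarrow> length (snd (fst (snd s) j)) = n"
proof (induction n arbitrary: s)
  case 0 then show ?case by (auto simp: init_state_def)
next
  case (Suc n)
  then obtain s0 where s0: "s0 \<in> set_pmf (run P0 f PW g n)" "s \<in> set_pmf (step f PW g (Suc n) s0)" by auto
  obtain x h c where sx: "s0 = (x, h, c)" by (cases s0) auto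
  from set_step[OF s0(2)[unfolded sx]] Suc.IH[OF s0(1)] sx show ?case
    by auto
qed

lemma run_finite:
  fixes P0 :: "('x::finite \<times> ('p::finite \<Rightarrow> 'h::finite)) pmf"
    and f :: "nat \<Rightarrow> 'x \<Rightarrow> ('p \<Rightarrow> 'u::finite) \<Rightarrow> 'w::finite \<Rightarrow> 'x \<times> ('p \<Rightarrow> 'z) \<times> ('p \<Rightarrow> real)"
  shows "finite (set_pmf (run P0 f PW g n))"
proof (induction n)
  case 0 then show ?case by (simp add: init_state_def)
next
  case (Suc n)
  have "\<And>s. finite (set_pmf (step f PW g (Suc n) s))"
    by (auto simp: step_def split: prod.splits)
  with Suc show ?case by simp
qed

lemma exp_bind:
  fixes h :: "'b \<Rightarrow> real"
  assumes "finite (set_pmf M)" "\<And>a. a \<in> set_pmf M \<Longrightarrow> finite (set_pmf (K a))"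
  shows "measure_pmf.expectation (bind_pmf M K) h = measure_pmf.expectation M (\<lambda>a. measure_pmf.expectation (K a) h)"
  using pmf_expectation_bind[OF assms(1) assms(2) subset_refl, where h=h]
    integral_measure_pmf[OF assms(1), of M "\<lambda>a. measure_pmf.expectation (K a) h"]
  by simp

lemma exp_add_const:
  fixes g :: "'b \<Rightarrow> real"
  assumes "finite (set_pmf M)"
  shows "measure_pmf.expectation M (\<lambda>x. c + g x) = c + measure_pmf.expectation M g"
proof -
  have "measure_pmf.expectation M (\<lambda>x. c + g x) = measure_pmf.expectation M (\<lambda>_. c) + measure_pmf.expectation M g"
    by (rule Bochner_Integration.integral_add) (auto intro: integrable_measure_pmf_finite[OF assms])
  then show ?thesis by simp
qed



definition pr2 :: "('p \<Rightarrow> 'h \<Rightarrow> 'k) \<Rightarrow> (nat \<Rightarrow> 'p \<Rightarrow> 'k \<Rightarrow> 'z \<Rightarrow> 'k) \<Rightarrow> 'p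
    \<Rightarrow> 'x \<times> ('p \<Rightarrow> ('h, 'z) hist) \<Rightarrow> 'x \<times> ('p \<Rightarrow> ('h, 'z) hist) \<times> 'k" where
  "pr2 iota1 iota i = (\<lambda>(x, h). (x, restrict h (- {i}), compr iota1 iota i (h i)))"

definition Jt where
  "Jt P0 f PW iota1 iota i p t = bind_pmf (XH P0 f PW p t)
     (\<lambda>(x, h). map_pmf (\<lambda>u. (pr2 iota1 iota i (x, h), u)) (Pi_pmf UNIV undefined (\<lambda>j. p j t (h j))))"

definition Nxt where
  "Nxt f iota i t = (\<lambda>(((x, h', k), u), w). case f t x u w of (x', z, r) \<Rightarrow>
      (x', restrict (\<lambda>j. (fst (h' j), snd (h' j) @ [z j])) (- {i}), iota (Suc t) i k (z i)))"

definition Rw where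
  "Rw f PW j t = (\<lambda>(y, u). measure_pmf.expectation (PW t) (\<lambda>w. snd (snd (f t (fst y) u w)) j))"

lemma trans_L:
  fixes P0 :: "('x::finite \<times> ('p::finite \<Rightarrow> 'h::finite)) pmf"
    and f :: "nat \<Rightarrow> 'x \<Rightarrow> ('p \<Rightarrow> 'u::finite) \<Rightarrow> 'w::finite \<Rightarrow> 'x \<times> ('p \<Rightarrow> 'z) \<times> ('p \<Rightarrow> real)"
  shows "map_pmf (pr2 iota1 iota i) (XH P0 f PW p (Suc (Suc n)))
       = map_pmf (Nxt f iota i (Suc n)) (bind_pmf (Jt P0 f PW iota1 iota i p (Suc n)) (\<lambda>yu. map_pmf (\<lambda>w. (yu, w)) (PW (Suc n))))"
proof -
  have "map_pmf (pr2 iota1 iota i) (XH P0 f PW p (Suc (Suc n)))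
      = bind_pmf (run P0 f PW p n) (\<lambda>s. map_pmf (\<lambda>(x, h, c). pr2 iota1 iota i (x, h)) (step f PW p (Suc n) s))"
    by (simp add: XH_def map_bind_pmf map_pmf_comp case_prod_beta')
  also have "\<dots> = bind_pmf (run P0 f PW p n) (\<lambda>s. case s of (x, h, c) \<Rightarrow>
        bind_pmf (Pi_pmf UNIV undefined (\<lambda>j. p j (Suc n) (h j))) (\<lambda>u.
          map_pmf (\<lambda>w. Nxt f iota i (Suc n) ((pr2 iota1 iota i (x, h), u), w)) (PW (Suc n))))"
  proof (rule bind_pmf_cong, simp)
    fix s assume s: "s \<in> set_pmf (run P0 f PW p n)"
    obtain x h c where sx: "s = (x, h, c)" by (cases s) auto
    have len: "length (snd (h i)) = n" using run_len[OF s, of i] sx by simp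
    have "map_pmf (\<lambda>(x, h, c). pr2 iota1 iota i (x, h)) (step f PW p (Suc n) (x, h, c)) =
        bind_pmf (Pi_pmf UNIV undefined (\<lambda>j. p j (Suc n) (h j))) (\<lambda>u.
          map_pmf (\<lambda>w. Nxt f iota i (Suc n) ((pr2 iota1 iota i (x, h), u), w)) (PW (Suc n)))"
      unfolding step_def
      apply (simp add: map_bind_pmf)
      apply (rule bind_pmf_cong, simp)
      apply (simp add: map_pmf_def)
      apply (rule bind_pmf_cong, simp)
      subgoal for u w
        by (cases "f (Suc n) x u w")
           (simp add: pr2_def Nxt_def compr_snoc len fun_eq_iff restrict_def bind_return_pmf)
      done
    then show "map_pmf (\<lambda>(x, h, c). pr2 iota1 iota i (x, h)) (step f PW p (Suc n) s) = (case s of (x, h, c) \<Rightarrow>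
        bind_pmf (Pi_pmf UNIV undefined (\<lambda>j. p j (Suc n) (h j))) (\<lambda>u.
          map_pmf (\<lambda>w. Nxt f iota i (Suc n) ((pr2 iota1 iota i (x, h), u), w)) (PW (Suc n))))"
      using sx by simp
  qed
  also have "\<dots> = map_pmf (Nxt f iota i (Suc n)) (bind_pmf (Jt P0 f PW iota1 iota i p (Suc n)) (\<lambda>yu. map_pmf (\<lambda>w. (yu, w)) (PW (Suc n))))"
    by (simp add: Jt_def XH_def map_bind_pmf bind_map_pmf bind_assoc_pmf map_pmf_comp case_prod_beta')
  finally show ?thesis .
qed



lemma reward_step:
  fixes P0 :: "('x::finite \<times> ('p::finite \<Rightarrow> 'h::finite)) pmf"
    and f :: "nat \<Rightarrow> 'x \<Rightarrow> ('p \<Rightarrow> 'u::finite) \<Rightarrow> 'w::finite \<Rightarrow> 'x \<times> ('p \<Rightarrow> 'z) \<times> ('p \<Rightarrow> real)"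
  shows "measure_pmf.expectation (run P0 f PW p (Suc n)) (\<lambda>(x, h, c). c j)
       = measure_pmf.expectation (run P0 f PW p n) (\<lambda>(x, h, c). c j)
         + measure_pmf.expectation (Jt P0 f PW ia ib ii p (Suc n)) (Rw f PW j (Suc n))"
proof -
  let ?ER = "\<lambda>x h. measure_pmf.expectation (Pi_pmf UNIV undefined (\<lambda>l. p l (Suc n) (h l)))
              (\<lambda>u. measure_pmf.expectation (PW (Suc n)) (\<lambda>w. snd (snd (f (Suc n) x u w)) j))"
  have fin: "finite (set_pmf (run P0 f PW p n))" by (rule run_finite)
  have "measure_pmf.expectation (run P0 f PW p (Suc n)) (\<lambda>(x, h, c). c j)
      = measure_pmf.expectation (run P0 f PW p n)
          (\<lambda>s. measure_pmf.expectation (step f PW p (Suc n) s) (\<lambda>(x, h, c). c j))"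
    by (simp, rule exp_bind[OF fin]) (auto simp: step_def split: prod.splits)
  also have "\<dots> = measure_pmf.expectation (run P0 f PW p n) (\<lambda>(x, h, c). c j + ?ER x h)"
  proof (rule Bochner_Integration.integral_cong, simp)
    fix s :: "'x \<times> ('p \<Rightarrow> ('h, 'z) hist) \<times> ('p \<Rightarrow> real)"
    obtain x h c where sx: "s = (x, h, c)" by (cases s) auto
    have "measure_pmf.expectation (step f PW p (Suc n) (x, h, c)) (\<lambda>(x, h, c). c j)
        = measure_pmf.expectation (Pi_pmf UNIV undefined (\<lambda>l. p l (Suc n) (h l)))
            (\<lambda>u. measure_pmf.expectation (PW (Suc n)) (\<lambda>w. c j + snd (snd (f (Suc n) x u w)) j))"
      unfolding step_def
      apply simp
      apply (subst exp_bind, simp, force split: prod.splits)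
      apply (rule Bochner_Integration.integral_cong, simp)
      apply (subst exp_bind, simp, simp split: prod.splits)
      apply (rule Bochner_Integration.integral_cong, simp)
      apply (simp split: prod.splits)
      done
    also have "\<dots> = c j + ?ER x h"
      by (simp add: exp_add_const)
    finally show "measure_pmf.expectation (step f PW p (Suc n) s) (\<lambda>(x, h, c). c j) = (case s of (x, h, c) \<Rightarrow> c j + ?ER x h)"
      using sx by simp
  qed
  also have "\<dots> = measure_pmf.expectation (run P0 f PW p n) (\<lambda>(x, h, c). c j)
       + measure_pmf.expectation (run P0 f PW p n) (\<lambda>(x, h, c). ?ER x h)"
    unfolding case_prod_beta'
    by (rule Bochner_Integration.integral_add) (auto intro: integrable_measure_pmf_finite[OF fin])
  also have "measure_pmf.expectation (run P0 f PW p n) (\<lambda>(x, h, c). ?ER x h)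
      = measure_pmf.expectation (Jt P0 f PW ia ib ii p (Suc n)) (Rw f PW j (Suc n))"
    unfolding Jt_def XH_def
    apply (subst exp_bind)
      apply (simp add: fin)
     apply (force split: prod.splits)
    apply (simp only: diff_Suc_1 integral_map_pmf)
    apply (rule Bochner_Integration.integral_cong, simp)
    subgoal for s by (cases s) (simp add: Rw_def pr2_def)
    done
  finally show ?thesis .
qed



theorem lemma5:
  fixes T :: nat
    and A :: "nat \<Rightarrow> 'p::finite \<Rightarrow> 'u::finite set"
    and P0 :: "('x::finite \<times> ('p \<Rightarrow> 'h::finite)) pmf"
    and f :: "nat \<Rightarrow> 'x \<Rightarrow> ('p \<Rightarrow> 'u) \<Rightarrow> 'w::finite \<Rightarrow> 'x \<times> ('p \<Rightarrow> 'z::finite) \<times> ('p \<Rightarrow> real)"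
    and PW :: "nat \<Rightarrow> 'w pmf"
    and act :: "nat \<Rightarrow> 'p \<Rightarrow> 'z \<Rightarrow> 'u"
    and iota1 :: "'p \<Rightarrow> 'h \<Rightarrow> 'k::finite"
    and iota :: "nat \<Rightarrow> 'p \<Rightarrow> 'k \<Rightarrow> 'z \<Rightarrow> 'k"
    and i :: 'p
    and F :: "(nat \<Rightarrow> ('h, 'z) hist \<Rightarrow> 'u pmf) \<Rightarrow> nat \<Rightarrow> 'k \<Rightarrow> ('h, 'z) hist pmf"
    and Phi :: "('p \<Rightarrow> nat \<Rightarrow> ('h, 'z) hist \<Rightarrow> 'u pmf) \<Rightarrow> nat \<Rightarrow> 'k \<Rightarrow> ('x \<times> ('p \<Rightarrow> ('h, 'z) hist)) pmf"
    and g :: "'p \<Rightarrow> nat \<Rightarrow> ('h, 'z) hist \<Rightarrow> 'u pmf"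
  assumes actions_nonempty: "\<forall>t \<in> {1..T}. \<forall>j. A t j \<noteq> {}"
    and reward_bound: "\<forall>t \<in> {1..T}. \<forall>x u w j. snd (snd (f t x u w)) j \<in> {-1..1}"
    and action_observed: "\<forall>t \<in> {1..T}. \<forall>x u w j. (\<forall>l. u l \<in> A t l) \<longrightarrow>
                            act t j (fst (snd (f t x u w)) j) = u j"
    and usi: "usi_funs T A P0 f PW iota1 iota i F Phi"
    and beh: "behavioral A g"
  shows "\<forall>j. payoff T P0 f PW g j
             = payoff T P0 f PW (g(i := kbased iota1 iota i (rho_of F (g i)))) j"
proof -
  define G' where "G' = g(i := kbased iota1 iota i (rho_of F (g i)))"
  define Ker2 where "Ker2 t = (\<lambda>(x :: 'x, h', k). map_pmf (\<lambda>u. ((x, h', k), u))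
      (Pi_pmf UNIV undefined (\<lambda>j. if j = i then rho_of F (g i) t k else g j t (h' j))))" for t
  have JG': "Jt P0 f PW iota1 iota i G' t = bind_pmf (map_pmf (pr2 iota1 iota i) (XH P0 f PW G' t)) (Ker2 t)" for t
    unfolding Jt_def bind_map_pmf
  proof (rule bind_pmf_cong, simp)
    fix y :: "'x \<times> ('p \<Rightarrow> ('h, 'z) hist)"
    obtain x h where yy: "y = (x, h)" by (cases y)
    have "Pi_pmf UNIV undefined (\<lambda>j. G' j t (h j)) =
          Pi_pmf UNIV undefined (\<lambda>j. if j = i then rho_of F (g i) t (compr iota1 iota i (h i)) else g j t (restrict h (- {i}) j))"
      by (rule Pi_pmf_cong) (auto simp: G'_def kbased_def)
    then show "(case y of (x, h) \<Rightarrow> map_pmf (\<lambda>u. (pr2 iota1 iota i (x, h), u)) (Pi_pmf UNIV undefined (\<lambda>j. G' j t (h j)))) =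
          Ker2 t (pr2 iota1 iota i y)"
      by (simp add: yy Ker2_def pr2_def)
  qed
  have Jg: "Jt P0 f PW iota1 iota i g t = bind_pmf (map_pmf (pr2 iota1 iota i) (XH P0 f PW g t)) (Ker2 t)"
    if t: "t \<in> {1..T}" for t
  proof -
    have e1: "Jt P0 f PW iota1 iota i g t = bind_pmf (XH P0 f PW g t) (\<lambda>(x, h). map_pmf (\<lambda>u. ((x, restrict h (- {i}), compr iota1 iota i (h i)), u)) (Pi_pmf UNIV undefined (\<lambda>j. g j t (h j))))"
      by (simp add: Jt_def pr2_def case_prod_beta')
    have e2: "pr2 iota1 iota i = (\<lambda>(x, h). (x, restrict h (- {i}), compr iota1 iota i (h i)))"
      by (simp add: pr2_def)
    have e3: "Ker2 t = (\<lambda>(x, h', k). map_pmf (\<lambda>u. ((x, h', k), u))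
      (Pi_pmf UNIV undefined (\<lambda>j. if j = i then bind_pmf (F (g i) t k) (g i t) else g j t (h' j))))"
      unfolding Ker2_def rho_of_def by (rule refl)
    show ?thesis unfolding e1 e2 e3
    proof (rule key_factor[where H = "Hset t"])
      fix x h j assume "(x, h) \<in> set_pmf (XH P0 f PW g t)"
      then obtain c where "(x, h, c) \<in> set_pmf (run P0 f PW g (t - 1))" by (auto simp: XH_def)
      from run_len[OF this, of j] show "h j \<in> Hset t" by (simp add: Hset_def)
    next
      fix k show "set_pmf (F (g i) t k) \<subseteq> Hset t" using usi t by (simp add: usi_funs_def)
    next
      fix k show "set_pmf (Phi g t k) \<subseteq> UNIV \<times> (- {i} \<rightarrow>\<^sub>E Hset t)" using usi t by (simp add: usi_funs_def)
    next
      fix k x and h :: "'p \<Rightarrow> ('h, 'z) hist"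
      assume "set_pmf (XH P0 f PW g t) \<inter> {(x, h). compr iota1 iota i (h i) = k} \<noteq> {}" "\<forall>j. h j \<in> Hset t"
      then show "pmf (cond_pmf (XH P0 f PW g t) {(x, h). compr iota1 iota i (h i) = k}) (x, h) =
           pmf (F (g i) t k) (h i) * pmf (Phi g t k) (x, restrict h (- {i}))"
        using usi t beh unfolding usi_funs_def Let_def by blast
    qed
  qed
  have Lg: "1 \<le> t \<longrightarrow> t \<le> T \<longrightarrow> map_pmf (pr2 iota1 iota i) (XH P0 f PW g t) = map_pmf (pr2 iota1 iota i) (XH P0 f PW G' t)" for t
  proof (induction t)
    case 0 then show ?case by simp
  next
    case (Suc t)
    show ?case
    proof (cases t)
      case 0 then show ?thesis by (simp add: XH_def)
    next
      case (Suc m)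
      show ?thesis
      proof (intro impI)
        assume "1 \<le> Suc t" "Suc t \<le> T"
        then have tT: "Suc m \<in> {1..T}" using Suc by simp
        have "Jt P0 f PW iota1 iota i g (Suc m) = Jt P0 f PW iota1 iota i G' (Suc m)"
          using Jg[OF tT] JG'[of "Suc m"] Suc.IH tT Suc by simp
        then show "map_pmf (pr2 iota1 iota i) (XH P0 f PW g (Suc t)) = map_pmf (pr2 iota1 iota i) (XH P0 f PW G' (Suc t))"
          unfolding Suc by (simp add: trans_L)
      qed
    qed
  qed
  have Jeq: "Jt P0 f PW iota1 iota i g t = Jt P0 f PW iota1 iota i G' t" if t: "t \<in> {1..T}" for t
    using Jg[OF t] JG'[of t] Lg[of t] t by simp
  have Eq: "n \<le> T \<longrightarrow> measure_pmf.expectation (run P0 f PW g n) (\<lambda>(x, h, c). c j)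
      = measure_pmf.expectation (run P0 f PW G' n) (\<lambda>(x, h, c). c j)" for n j
  proof (induction n)
    case 0 then show ?case by simp
  next
    case (Suc n)
    show ?case
    proof
      assume "Suc n \<le> T"
      then have "Suc n \<in> {1..T}" by simp
      then show "measure_pmf.expectation (run P0 f PW g (Suc n)) (\<lambda>(x, h, c). c j)
      = measure_pmf.expectation (run P0 f PW G' (Suc n)) (\<lambda>(x, h, c). c j)"
        using Suc.IH Jeq[of "Suc n"] \<open>Suc n \<le> T\<close>
        by (simp only: reward_step[where ia=iota1 and ib=iota and ii=i])
    qed
  qed
  show ?thesis
    unfolding payoff_def G'_def[symmetric] using Eq by blast
qed

end
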